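(* Let $A_1,B_1,B_2,C_1,C_2\in\mathbb{C}^{r\times r}$ with $C_1+mI,C_2+mI$ invertible for all $m\ge0$, $A_1B_1=B_1A_1$, $B_2C_i=C_iB_2$ ($i=1,2$) and $C_1C_2=C_2C_1$. Let $n\ge1$ and suppose $A_1+mI$ is invertible for all $m\ge0$. Then $$F_{14}[A_1+nI]=F_{14}+x_1B_1\Big[\sum_{n_1=1}^nF_{14}[A_1+n_1I,B_1+I,C_1+I]\Big]C_1^{-1}+x_2\Big[\sum_{n_1=1}^nF_{14}[A_1+n_1I,B_2+I,C_2+I]\Big]B_2C_2^{-1}+x_3B_1\Big[\sum_{n_1=1}^nF_{14}[A_1+n_1I,B_1+I,C_2+I]\Big]C_2^{-1}.$$ Furthermore, if $A_1-n_1I$ is invertible for $0\le n_1\le n$, then $$F_{14}[A_1-nI]=F_{14}-x_1B_1\Big[\sum_{n_1=0}^{n-1}F_{14}[A_1-n_1I,B_1+I,C_1+I]\Big]C_1^{-1}-x_2\Big[\sum_{n_1=0}^{n-1}F_{14}[A_1-n_1I,B_2+I,C_2+I]\Big]B_2C_2^{-1}-x_3B_1\Big[\sum_{n_1=0}^{n-1}F_{14}[A_1-n_1I,B_1+I,C_2+I]\Big]C_2^{-1}.$$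
   Context: For $M\in\mathbb{C}^{r\times r}$: $(M)_0=I$, $(M)_m=M(M+I)\cdots(M+(m-1)I)$, $(M)^{-1}_m=((M)_m)^{-1}$. The three-variable Lauricella matrix function $$F_{14}=F_{14}[A_1,B_1,B_2;C_1,C_2;x_1,x_2,x_3]=\sum_{m_1,m_2,m_3\ge0}(A_1)_{m_1+m_2+m_3}(B_1)_{m_1+m_3}(B_2)_{m_2}(C_1)^{-1}_{m_1}(C_2)^{-1}_{m_2+m_3}\frac{x_1^{m_1}x_2^{m_2}x_3^{m_3}}{m_1!m_2!m_3!},$$ with scalar variables $x_i$ and matrix products in the written order; identities are of formal power series in the $x_i$. $F_{14}[\dots]$ lists only the shifted parameters, all others unchanged. *)

theory Defs
  imports "HOL-Analysis.Analysis"
begin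

type_synonym 'n cmat = "complex ^ 'n ^ 'n"

text \<open>Three-variable formal power series with matrix coefficients are represented by
  their coefficient functions: G m1 m2 m3 is the coefficient of x1^m1 x2^m2 x3^m3.\<close>
type_synonym 'n mfps3 = "nat \<Rightarrow> nat \<Rightarrow> nat \<Rightarrow> 'n cmat"

fun mpoch :: "'n::finite cmat \<Rightarrow> nat \<Rightarrow> 'n cmat" where
  "mpoch M 0 = mat 1"
| "mpoch M (Suc m) = mpoch M m ** (M + mat (of_nat m))"

definition mpoch_inv :: "'n::finite cmat \<Rightarrow> nat \<Rightarrow> 'n cmat" where
  "mpoch_inv M m = matrix_inv (mpoch M m)"

definition F14 :: "'n::finite cmat \<Rightarrow> 'n cmat \<Rightarrow> 'n cmat \<Rightarrow> 'n cmat \<Rightarrow> 'n cmat \<Rightarrow> 'n mfps3" where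
  "F14 A1 B1 B2 C1 C2 = (\<lambda>m1 m2 m3.
     (1 / real (fact m1 * fact m2 * fact m3)) *\<^sub>R
     (mpoch A1 (m1 + m2 + m3) ** mpoch B1 (m1 + m3) ** mpoch B2 m2
      ** mpoch_inv C1 m1 ** mpoch_inv C2 (m2 + m3)))"

definition mulx1 :: "'n mfps3 \<Rightarrow> 'n::finite mfps3" where
  "mulx1 G = (\<lambda>m1 m2 m3. if m1 = 0 then 0 else G (m1 - 1) m2 m3)"
definition mulx2 :: "'n mfps3 \<Rightarrow> 'n::finite mfps3" where
  "mulx2 G = (\<lambda>m1 m2 m3. if m2 = 0 then 0 else G m1 (m2 - 1) m3)"
definition mulx3 :: "'n mfps3 \<Rightarrow> 'n::finite mfps3" where
  "mulx3 G = (\<lambda>m1 m2 m3. if m3 = 0 then 0 else G m1 m2 (m3 - 1))"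

end

theory Submission
  imports Defs
begin

type_synonym 'n M = "complex ^ 'n ^ 'n"

lemma mrdistrib: "((A::'n::finite M) + B) ** C = A ** C + B ** C"
  by (vector matrix_matrix_mult_def sum.distrib distrib_right)

lemma mat_ofnat_scale: "mat (of_nat k) = (real k *\<^sub>R mat 1 :: 'n::finite M)"
  by (vector mat_def scaleR_conv_of_real)

lemma mat_ofnat_left: "mat (of_nat k) ** (X::'n::finite M) = real k *\<^sub>R X"
  by (simp add: mat_ofnat_scale scalar_matrix_assoc[symmetric])

lemma mat_ofnat_right: "(X::'n::finite M) ** mat (of_nat k) = real k *\<^sub>R X"
  by (simp add: mat_ofnat_scale matrix_scalar_ac)

lemma mat_add: "mat (a + b) = (mat a + mat b :: 'n::finite M)"
  by (vector mat_def)

lemma mat_diff: "mat (a - b) = (mat a - mat b :: 'n::finite M)"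
  by (vector mat_def)

lemma inv_r: "invertible (A::'n::finite M) \<Longrightarrow> A ** matrix_inv A = mat 1"
  unfolding invertible_def matrix_inv_def by (rule someI2_ex) auto

lemma inv_l: "invertible (A::'n::finite M) \<Longrightarrow> matrix_inv A ** A = mat 1"
  unfolding invertible_def matrix_inv_def by (rule someI2_ex) auto

lemma minv_unique:
  assumes "(A::'n::finite M) ** B = mat 1" "B ** A = mat 1"
  shows "matrix_inv A = B"
proof -
  have i: "invertible A" using assms invertible_def by blast
  have "matrix_inv A = matrix_inv A ** (A ** B)" using assms by simp
  also have "\<dots> = (matrix_inv A ** A) ** B" by (simp add: matrix_mul_assoc)
  also have "\<dots> = B" using inv_l[OF i] by simp
  finally show ?thesis .
qed

lemma inv_mult:
  assumes "invertible (A::'n::finite M)" "invertible (B::'n M)"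
  shows "matrix_inv (A ** B) = matrix_inv B ** matrix_inv A"
proof (rule minv_unique)
  have "A ** B ** (matrix_inv B ** matrix_inv A) = A ** (B ** matrix_inv B) ** matrix_inv A"
    by (simp add: matrix_mul_assoc)
  then show "A ** B ** (matrix_inv B ** matrix_inv A) = mat 1" using inv_r[OF assms(1)] inv_r[OF assms(2)] by simp
  have "matrix_inv B ** matrix_inv A ** (A ** B) = matrix_inv B ** (matrix_inv A ** A) ** B"
    by (simp add: matrix_mul_assoc)
  then show "matrix_inv B ** matrix_inv A ** (A ** B) = mat 1" using inv_l[OF assms(1)] inv_l[OF assms(2)] by simp
qed

lemma comm_inv:
  assumes "(X::'n::finite M) ** Y = Y ** X" "invertible Y"
  shows "X ** matrix_inv Y = matrix_inv Y ** X"
proof -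
  have "X ** matrix_inv Y = matrix_inv Y ** (Y ** X) ** matrix_inv Y"
    using inv_l[OF assms(2)] by (simp add: matrix_mul_assoc)
  also have "\<dots> = matrix_inv Y ** (X ** Y) ** matrix_inv Y"
    using assms(1) by simp
  also have "\<dots> = matrix_inv Y ** X ** (Y ** matrix_inv Y)"
    by (simp add: matrix_mul_assoc)
  also have "\<dots> = matrix_inv Y ** X" using inv_r[OF assms(2)] by simp
  finally show ?thesis .
qed

lemma comm_poch:
  assumes "(X::'n::finite M) ** A = A ** X"
  shows "X ** mpoch A m = mpoch A m ** X"
proof (induction m)
  case 0 then show ?case by simp
next
  case (Suc m)
  have "X ** mpoch A (Suc m) = (X ** mpoch A m) ** (A + mat (of_nat m))"
    by (simp add: matrix_mul_assoc)
  also have "\<dots> = mpoch A m ** (X ** (A + mat (of_nat m)))"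
    using Suc by (simp add: matrix_mul_assoc)
  also have "X ** (A + mat (of_nat m)) = (A + mat (of_nat m)) ** X"
    using assms by (simp add: matrix_add_ldistrib mrdistrib mat_ofnat_left mat_ofnat_right)
  finally show ?case by (simp add: matrix_mul_assoc)
qed

lemma poch_Suc_left: "mpoch (A::'n::finite M) (Suc m) = A ** mpoch (A + mat 1) m"
proof (induction m)
  case 0 then show ?case by simp
next
  case (Suc m)
  have "mpoch A (Suc (Suc m)) = A ** mpoch (A + mat 1) m ** (A + mat (of_nat (Suc m)))"
    using Suc by simp
  also have "A + mat (of_nat (Suc m)) = A + mat 1 + mat (of_nat m)"
    by (simp add: mat_add add.assoc)
  finally show ?case by (simp add: matrix_mul_assoc)
qed

lemma poch_shift:
  "mpoch ((A::'n::finite M) + mat 1) (Suc m) = mpoch A (Suc m) + real (Suc m) *\<^sub>R mpoch (A + mat 1) m"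
proof -
  have c: "A ** mpoch (A + mat 1) m = mpoch (A + mat 1) m ** A"
    by (rule comm_poch) (simp add: matrix_add_ldistrib mrdistrib)
  have "mpoch (A + mat 1) (Suc m) = mpoch (A + mat 1) m ** (A + mat (of_nat (Suc m)))"
    by (simp add: mat_add add.assoc)
  also have "\<dots> = mpoch A (Suc m) + real (Suc m) *\<^sub>R mpoch (A + mat 1) m"
    by (simp only: matrix_add_ldistrib poch_Suc_left c mat_ofnat_right)
  finally show ?thesis .
qed

lemma poch_inv:
  assumes "\<forall>k::nat. invertible ((C::'n::finite M) + mat (of_nat k))"
  shows "invertible (mpoch C m)"
proof (induction m)
  case 0 then show ?case by (simp add: invertible_def)
next
  case (Suc m)
  have "invertible (C + mat (of_nat m))" using assms by blast
  then show ?case using Suc.IH invertible_mult by simp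
qed

lemma pochinv_Suc:
  assumes "\<forall>k::nat. invertible ((C::'n::finite M) + mat (of_nat k))"
  shows "mpoch_inv C (Suc m) = mpoch_inv (C + mat 1) m ** matrix_inv C"
proof -
  have a: "\<forall>k::nat. invertible ((C + mat 1) + mat (of_nat k))"
  proof
    fix k :: nat
    have "(C + mat 1) + mat (of_nat k) = C + mat (of_nat (Suc k))" by (simp add: mat_add add.assoc)
    then show "invertible ((C + mat 1) + mat (of_nat k))" using assms by metis
  qed
  have c0: "invertible C" using assms[rule_format, of 0] by simp
  show ?thesis unfolding mpoch_inv_def poch_Suc_left
    by (rule inv_mult[OF c0 poch_inv[OF a]])
qed

lemma comm_push: "(P::'n::finite M) ** B = B ** P \<Longrightarrow> P ** (B ** Z) = B ** (P ** Z)"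
  by (metis matrix_mul_assoc)

lemma rearr1:
  assumes "(P::'n::finite M) ** B = B ** P" "ic ** Q4 = Q4 ** ic"
  shows "P ** (B ** Q1) ** Q2 ** (Q3 ** ic) ** Q4 = B ** (P ** Q1 ** Q2 ** Q3 ** Q4) ** ic"
  by (simp add: matrix_mul_assoc[symmetric] comm_push[OF assms(1)] assms(2))

lemma rearr2:
  assumes "(b::'n::finite M) ** R = R ** b" "b ** S = S ** b"
  shows "P ** Q1 ** (Q2 ** b) ** R ** (S ** ic) = P ** Q1 ** Q2 ** R ** S ** b ** ic"
  by (simp add: matrix_mul_assoc[symmetric] comm_push[OF assms(1)] comm_push[OF assms(2)])

lemma rearr3:
  assumes "(P::'n::finite M) ** B = B ** P"
  shows "P ** (B ** Q1) ** Q2 ** Q3 ** (Q4 ** ic) = B ** (P ** Q1 ** Q2 ** Q3 ** Q4) ** ic"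
  by (simp add: matrix_mul_assoc[symmetric] comm_push[OF assms(1)])

lemma shift_inv:
  assumes "\<forall>k::nat. invertible ((C::'n::finite M) + mat (of_nat k))"
  shows "\<forall>k::nat. invertible ((C + mat 1) + mat (of_nat k))"
proof
  fix k :: nat
  have "(C + mat 1) + mat (of_nat k) = C + mat (of_nat (Suc k))" by (simp add: mat_add add.assoc)
  then show "invertible ((C + mat 1) + mat (of_nat k))" using assms by metis
qed

lemma comm_shift: "(X::'n::finite M) ** C = C ** X \<Longrightarrow> X ** (C + mat 1) = (C + mat 1) ** X"
  by (simp add: matrix_add_ldistrib mrdistrib)

definition Tm :: "'n::finite M \<Rightarrow> 'n M \<Rightarrow> 'n M \<Rightarrow> 'n M \<Rightarrow> 'n M \<Rightarrow> 'n mfps3" where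
  "Tm X B1 B2 C1 C2 = (\<lambda>m1 m2 m3.
     B1 ** mulx1 (F14 X (B1 + mat 1) B2 (C1 + mat 1) C2) m1 m2 m3 ** matrix_inv C1
   + mulx2 (F14 X B1 (B2 + mat 1) C1 (C2 + mat 1)) m1 m2 m3 ** B2 ** matrix_inv C2
   + B1 ** mulx3 (F14 X (B1 + mat 1) B2 C1 (C2 + mat 1)) m1 m2 m3 ** matrix_inv C2)"

lemma fact_scal: "1 / real (fact (Suc k) * (p::nat)) * real (Suc k) = 1 / real (fact k * p)"
proof -
  have e: "real (fact (Suc k) * p) = real (Suc k) * real (fact k * p)" by (simp add: algebra_simps)
  have g: "\<And>x y::real. x > 0 \<Longrightarrow> 1/(x*y)*x = 1/y" by simp
  show ?thesis unfolding e by (rule g) simp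
qed

lemma inv0: "\<forall>k::nat. invertible ((C::'n::finite M) + mat (of_nat k)) \<Longrightarrow> invertible C"
  by (metis add.right_neutral mat_0 of_nat_0)

lemma core:
  fixes A B1 B2 C1 C2 :: "'n::finite M"
  assumes C1inv: "\<forall>k::nat. invertible (C1 + mat (of_nat k))"
    and C2inv: "\<forall>k::nat. invertible (C2 + mat (of_nat k))"
    and AB: "(A + mat 1) ** B1 = B1 ** (A + mat 1)"
    and BC1: "B2 ** C1 = C1 ** B2"
    and BC2: "B2 ** C2 = C2 ** B2"
    and CC: "C1 ** C2 = C2 ** C1"
  shows "F14 (A + mat 1) B1 B2 C1 C2 m1 m2 m3 = F14 A B1 B2 C1 C2 m1 m2 m3 + Tm (A + mat 1) B1 B2 C1 C2 m1 m2 m3"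
proof (cases "m1 + m2 + m3")
  case 0
  then show ?thesis by (simp add: F14_def Tm_def mulx1_def mulx2_def mulx3_def)
next
  case (Suc M)
  note MS = Suc
  define c where "c = 1 / real (fact m1 * fact m2 * fact m3)"
  define Q where "Q = mpoch (A + mat 1) M ** mpoch B1 (m1+m3) ** mpoch B2 m2 ** mpoch_inv C1 m1 ** mpoch_inv C2 (m2+m3)"
  have cA: "\<And>j. mpoch (A + mat 1) j ** B1 = B1 ** mpoch (A + mat 1) j"
    using comm_poch[OF AB[symmetric]] by metis
  have ic1: "\<And>j. matrix_inv C1 ** mpoch_inv C2 j = mpoch_inv C2 j ** matrix_inv C1"
  proof -
    fix j
    have "C1 ** mpoch C2 j = mpoch C2 j ** C1" by (rule comm_poch[OF CC])
    then have "C1 ** mpoch_inv C2 j = mpoch_inv C2 j ** C1" unfolding mpoch_inv_def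
      by (rule comm_inv[OF _ poch_inv[OF C2inv]])
    then have "mpoch_inv C2 j ** matrix_inv C1 = matrix_inv C1 ** mpoch_inv C2 j"
      by (intro comm_inv[OF _ inv0[OF C1inv]]) simp
    then show "matrix_inv C1 ** mpoch_inv C2 j = mpoch_inv C2 j ** matrix_inv C1" by simp
  qed
  have b2c1: "\<And>j. B2 ** mpoch_inv C1 j = mpoch_inv C1 j ** B2"
    unfolding mpoch_inv_def by (rule comm_inv[OF comm_poch[OF BC1] poch_inv[OF C1inv]])
  have b2c2: "\<And>j. B2 ** mpoch_inv (C2 + mat 1) j = mpoch_inv (C2 + mat 1) j ** B2"
    unfolding mpoch_inv_def
    by (rule comm_inv[OF comm_poch[OF comm_shift[OF BC2]] poch_inv[OF shift_inv[OF C2inv]]])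
  have b2p: "\<And>j. mpoch B2 (Suc j) = mpoch (B2 + mat 1) j ** B2"
    using poch_Suc_left comm_poch[OF comm_shift[OF refl]] by metis
  have e: "real (Suc M) = real m1 + real m2 + real m3" using MS by (metis of_nat_add)
  have "F14 (A + mat 1) B1 B2 C1 C2 m1 m2 m3 = F14 A B1 B2 C1 C2 m1 m2 m3 + (c * real (Suc M)) *\<^sub>R Q"
  proof -
    have ps: "mpoch (A + mat 1) (m1 + m2 + m3) = mpoch A (m1 + m2 + m3) + real (Suc M) *\<^sub>R mpoch (A + mat 1) M"
      unfolding MS by (rule poch_shift)
    show ?thesis unfolding F14_def ps
      by (simp del: mpoch.simps add: c_def Q_def mrdistrib scalar_matrix_assoc[symmetric] scaleR_add_right)
  qed
  also have "(c * real (Suc M)) *\<^sub>R Q = (c * real m1) *\<^sub>R Q + (c * real m2) *\<^sub>R Q + (c * real m3) *\<^sub>R Q"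
    unfolding e by (simp add: distrib_left scaleR_add_left)
  also have "(c * real m1) *\<^sub>R Q = B1 ** mulx1 (F14 (A + mat 1) (B1 + mat 1) B2 (C1 + mat 1) C2) m1 m2 m3 ** matrix_inv C1"
  proof (cases m1)
    case 0 then show ?thesis by (simp add: mulx1_def)
  next
    case (Suc k)
    have s: "c * real m1 = 1 / real (fact k * fact m2 * fact m3)"
      using Suc fact_scal[of k "fact m2 * fact m3"] by (simp add: c_def ac_simps del: of_nat_Suc)
    have M: "M = k + m2 + m3" using MS Suc by simp
    have q: "Q = B1 ** (mpoch (A + mat 1) (k + m2 + m3) ** mpoch (B1 + mat 1) (k + m3) ** mpoch B2 m2 ** mpoch_inv (C1 + mat 1) k ** mpoch_inv C2 (m2 + m3)) ** matrix_inv C1"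
    proof -
      have "Q = mpoch (A + mat 1) M ** (B1 ** mpoch (B1 + mat 1) (k + m3)) ** mpoch B2 m2 ** (mpoch_inv (C1 + mat 1) k ** matrix_inv C1) ** mpoch_inv C2 (m2 + m3)"
        unfolding Q_def Suc by (simp del: mpoch.simps add: poch_Suc_left pochinv_Suc[OF C1inv])
      also have "\<dots> = B1 ** (mpoch (A + mat 1) M ** mpoch (B1 + mat 1) (k + m3) ** mpoch B2 m2 ** mpoch_inv (C1 + mat 1) k ** mpoch_inv C2 (m2 + m3)) ** matrix_inv C1"
        by (rule rearr1[OF cA ic1])
      finally show ?thesis unfolding M .
    qed
    show ?thesis unfolding s q using Suc
      by (simp add: mulx1_def F14_def matrix_scalar_ac scalar_matrix_assoc[symmetric])
  qed
  also have "(c * real m2) *\<^sub>R Q = mulx2 (F14 (A + mat 1) B1 (B2 + mat 1) C1 (C2 + mat 1)) m1 m2 m3 ** B2 ** matrix_inv C2"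
  proof (cases m2)
    case 0 then show ?thesis by (simp add: mulx2_def)
  next
    case (Suc k)
    have s: "c * real m2 = 1 / real (fact m1 * fact k * fact m3)"
      using Suc fact_scal[of k "fact m1 * fact m3"] by (simp add: c_def ac_simps del: of_nat_Suc)
    have M: "M = m1 + k + m3" using MS Suc by simp
    have q: "Q = mpoch (A + mat 1) (m1 + k + m3) ** mpoch B1 (m1 + m3) ** mpoch (B2 + mat 1) k ** mpoch_inv C1 m1 ** mpoch_inv (C2 + mat 1) (k + m3) ** B2 ** matrix_inv C2"
    proof -
      have "Q = mpoch (A + mat 1) M ** mpoch B1 (m1 + m3) ** (mpoch (B2 + mat 1) k ** B2) ** mpoch_inv C1 m1 ** (mpoch_inv (C2 + mat 1) (k + m3) ** matrix_inv C2)"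
        unfolding Q_def Suc by (simp del: mpoch.simps add: b2p pochinv_Suc[OF C2inv])
      also have "\<dots> = mpoch (A + mat 1) M ** mpoch B1 (m1 + m3) ** mpoch (B2 + mat 1) k ** mpoch_inv C1 m1 ** mpoch_inv (C2 + mat 1) (k + m3) ** B2 ** matrix_inv C2"
        by (rule rearr2[OF b2c1 b2c2])
      finally show ?thesis unfolding M .
    qed
    show ?thesis unfolding s q using Suc
      by (simp add: mulx2_def F14_def matrix_scalar_ac scalar_matrix_assoc[symmetric])
  qed
  also have "(c * real m3) *\<^sub>R Q = B1 ** mulx3 (F14 (A + mat 1) (B1 + mat 1) B2 C1 (C2 + mat 1)) m1 m2 m3 ** matrix_inv C2"
  proof (cases m3)
    case 0 then show ?thesis by (simp add: mulx3_def)
  next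
    case (Suc k)
    have s: "c * real m3 = 1 / real (fact m1 * fact m2 * fact k)"
      using Suc fact_scal[of k "fact m1 * fact m2"] by (simp add: c_def ac_simps del: of_nat_Suc)
    have M: "M = m1 + m2 + k" using MS Suc by simp
    have q: "Q = B1 ** (mpoch (A + mat 1) (m1 + m2 + k) ** mpoch (B1 + mat 1) (m1 + k) ** mpoch B2 m2 ** mpoch_inv C1 m1 ** mpoch_inv (C2 + mat 1) (m2 + k)) ** matrix_inv C2"
    proof -
      have "Q = mpoch (A + mat 1) M ** (B1 ** mpoch (B1 + mat 1) (m1 + k)) ** mpoch B2 m2 ** mpoch_inv C1 m1 ** (mpoch_inv (C2 + mat 1) (m2 + k) ** matrix_inv C2)"
        unfolding Q_def Suc by (simp del: mpoch.simps add: poch_Suc_left pochinv_Suc[OF C2inv])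
      also have "\<dots> = B1 ** (mpoch (A + mat 1) M ** mpoch (B1 + mat 1) (m1 + k) ** mpoch B2 m2 ** mpoch_inv C1 m1 ** mpoch_inv (C2 + mat 1) (m2 + k)) ** matrix_inv C2"
        by (rule rearr3[OF cA])
      finally show ?thesis unfolding M .
    qed
    show ?thesis unfolding s q using Suc
      by (simp add: mulx3_def F14_def matrix_scalar_ac scalar_matrix_assoc[symmetric])
  qed
  finally show ?thesis by (simp add: Tm_def add.assoc)
qed

lemma mrdiff: "((A::'n::finite M) - B) ** C = A ** C - B ** C"
  by (vector matrix_matrix_mult_def sum_subtractf left_diff_distrib)

lemma mldiff: "(C::'n::finite M) ** (A - B) = C ** A - C ** B"
  by (vector matrix_matrix_mult_def sum_subtractf right_diff_distrib)

lemma mulx1_sum: "mulx1 (\<lambda>k1 k2 k3. \<Sum>n1\<in>S. f n1 k1 k2 k3) m1 m2 m3 = (\<Sum>n1\<in>S. mulx1 (f n1) m1 m2 m3)"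
  by (simp add: mulx1_def)
lemma mulx2_sum: "mulx2 (\<lambda>k1 k2 k3. \<Sum>n1\<in>S. f n1 k1 k2 k3) m1 m2 m3 = (\<Sum>n1\<in>S. mulx2 (f n1) m1 m2 m3)"
  by (simp add: mulx2_def)
lemma mulx3_sum: "mulx3 (\<lambda>k1 k2 k3. \<Sum>n1\<in>S. f n1 k1 k2 k3) m1 m2 m3 = (\<Sum>n1\<in>S. mulx3 (f n1) m1 m2 m3)"
  by (simp add: mulx3_def)

lemma mm_sum_left: "(X::'n::finite M) ** sum (f::_\<Rightarrow>'n M) S = sum (\<lambda>i. X ** f i) S"
  by (induct S rule: infinite_finite_induct) (simp_all add: matrix_add_ldistrib)
lemma mm_sum_right: "sum (f::_\<Rightarrow>'n::finite M) S ** (X::'n::finite M) = sum (\<lambda>i. f i ** X) S"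
  by (induct S rule: infinite_finite_induct) (simp_all add: mrdistrib)

lemma expand_sum0:
  fixes B1 B2 C1 C2 :: "'n::finite M"
  shows "B1 ** mulx1 (\<lambda>k1 k2 k3. \<Sum>n1\<in>S. F14 (g n1) (B1 + mat 1) B2 (C1 + mat 1) C2 k1 k2 k3) m1 m2 m3 ** matrix_inv C1
      + mulx2 (\<lambda>k1 k2 k3. \<Sum>n1\<in>S. F14 (g n1) B1 (B2 + mat 1) C1 (C2 + mat 1) k1 k2 k3) m1 m2 m3 ** B2 ** matrix_inv C2
      + B1 ** mulx3 (\<lambda>k1 k2 k3. \<Sum>n1\<in>S. F14 (g n1) (B1 + mat 1) B2 C1 (C2 + mat 1) k1 k2 k3) m1 m2 m3 ** matrix_inv C2
    = (\<Sum>n1\<in>S. Tm (g n1) B1 B2 C1 C2 m1 m2 m3)"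
  by (simp add: Tm_def mulx1_sum mulx2_sum mulx3_sum mm_sum_left mm_sum_right sum.distrib)

lemma expand_sum:
  fixes B1 B2 C1 C2 :: "'n::finite M"
  shows "a + B1 ** mulx1 (\<lambda>k1 k2 k3. \<Sum>n1\<in>S. F14 (g n1) (B1 + mat 1) B2 (C1 + mat 1) C2 k1 k2 k3) m1 m2 m3 ** matrix_inv C1
      + mulx2 (\<lambda>k1 k2 k3. \<Sum>n1\<in>S. F14 (g n1) B1 (B2 + mat 1) C1 (C2 + mat 1) k1 k2 k3) m1 m2 m3 ** B2 ** matrix_inv C2
      + B1 ** mulx3 (\<lambda>k1 k2 k3. \<Sum>n1\<in>S. F14 (g n1) (B1 + mat 1) B2 C1 (C2 + mat 1) k1 k2 k3) m1 m2 m3 ** matrix_inv C2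
    = a + (\<Sum>n1\<in>S. Tm (g n1) B1 B2 C1 C2 m1 m2 m3)"
  by (simp add: Tm_def mulx1_sum mulx2_sum mulx3_sum mm_sum_left mm_sum_right sum.distrib add.assoc)

lemma expand_sum_minus:
  fixes B1 B2 C1 C2 :: "'n::finite M"
  shows "a - B1 ** mulx1 (\<lambda>k1 k2 k3. \<Sum>n1\<in>S. F14 (g n1) (B1 + mat 1) B2 (C1 + mat 1) C2 k1 k2 k3) m1 m2 m3 ** matrix_inv C1
      - mulx2 (\<lambda>k1 k2 k3. \<Sum>n1\<in>S. F14 (g n1) B1 (B2 + mat 1) C1 (C2 + mat 1) k1 k2 k3) m1 m2 m3 ** B2 ** matrix_inv C2
      - B1 ** mulx3 (\<lambda>k1 k2 k3. \<Sum>n1\<in>S. F14 (g n1) (B1 + mat 1) B2 C1 (C2 + mat 1) k1 k2 k3) m1 m2 m3 ** matrix_inv C2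
    = a - (\<Sum>n1\<in>S. Tm (g n1) B1 B2 C1 C2 m1 m2 m3)"
  by (simp add: Tm_def mulx1_sum mulx2_sum mulx3_sum mm_sum_left mm_sum_right sum.distrib diff_diff_eq add.assoc)

theorem mainTheorem19:
  fixes A1 B1 B2 C1 C2 :: "complex ^ 'n::finite ^ 'n"
    and n :: nat
  assumes C1inv: "\<forall>m::nat. invertible (C1 + mat (of_nat m))"
    and C2inv: "\<forall>m::nat. invertible (C2 + mat (of_nat m))"
    and AB: "A1 ** B1 = B1 ** A1"
    and BC1: "B2 ** C1 = C1 ** B2"
    and BC2: "B2 ** C2 = C2 ** B2"
    and CC: "C1 ** C2 = C2 ** C1"
    and n: "n \<ge> 1"
    and Ainv: "\<forall>m::nat. invertible (A1 + mat (of_nat m))"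
  shows "(\<forall>m1 m2 m3.
      F14 (A1 + mat (of_nat n)) B1 B2 C1 C2 m1 m2 m3 =
        F14 A1 B1 B2 C1 C2 m1 m2 m3
      + B1 ** mulx1 (\<lambda>k1 k2 k3. \<Sum>n1 = 1..n.
            F14 (A1 + mat (of_nat n1)) (B1 + mat 1) B2 (C1 + mat 1) C2 k1 k2 k3) m1 m2 m3
          ** matrix_inv C1
      + mulx2 (\<lambda>k1 k2 k3. \<Sum>n1 = 1..n.
            F14 (A1 + mat (of_nat n1)) B1 (B2 + mat 1) C1 (C2 + mat 1) k1 k2 k3) m1 m2 m3
          ** B2 ** matrix_inv C2
      + B1 ** mulx3 (\<lambda>k1 k2 k3. \<Sum>n1 = 1..n.
            F14 (A1 + mat (of_nat n1)) (B1 + mat 1) B2 C1 (C2 + mat 1) k1 k2 k3) m1 m2 m3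
          ** matrix_inv C2)
    \<and>
    ((\<forall>n1\<le>n. invertible (A1 - mat (of_nat n1))) \<longrightarrow>
     (\<forall>m1 m2 m3.
      F14 (A1 - mat (of_nat n)) B1 B2 C1 C2 m1 m2 m3 =
        F14 A1 B1 B2 C1 C2 m1 m2 m3
      - B1 ** mulx1 (\<lambda>k1 k2 k3. \<Sum>n1 = 0..n-1.
            F14 (A1 - mat (of_nat n1)) (B1 + mat 1) B2 (C1 + mat 1) C2 k1 k2 k3) m1 m2 m3
          ** matrix_inv C1
      - mulx2 (\<lambda>k1 k2 k3. \<Sum>n1 = 0..n-1.
            F14 (A1 - mat (of_nat n1)) B1 (B2 + mat 1) C1 (C2 + mat 1) k1 k2 k3) m1 m2 m3
          ** B2 ** matrix_inv C2
      - B1 ** mulx3 (\<lambda>k1 k2 k3. \<Sum>n1 = 0..n-1.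
            F14 (A1 - mat (of_nat n1)) (B1 + mat 1) B2 C1 (C2 + mat 1) k1 k2 k3) m1 m2 m3
          ** matrix_inv C2))"
proof -
  have cp: "\<And>k. (A1 + mat (of_nat k)) ** B1 = B1 ** (A1 + mat (of_nat k))"
    using AB by (simp add: matrix_add_ldistrib mrdistrib mat_ofnat_left mat_ofnat_right)
  have cm: "\<And>k. (A1 - mat (of_nat k)) ** B1 = B1 ** (A1 - mat (of_nat k))"
    using AB by (simp add: mldiff mrdiff mat_ofnat_left mat_ofnat_right)
  have P1: "F14 (A1 + mat (of_nat N)) B1 B2 C1 C2 m1 m2 m3 =
      F14 A1 B1 B2 C1 C2 m1 m2 m3 + (\<Sum>n1 = 1..N. Tm (A1 + mat (of_nat n1)) B1 B2 C1 C2 m1 m2 m3)" for N m1 m2 m3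
  proof (induction N)
    case 0 then show ?case by simp
  next
    case (Suc N)
    have e: "A1 + mat (of_nat (Suc N)) = (A1 + mat (of_nat N)) + mat 1"
      by (simp add: mat_add algebra_simps)
    have "F14 (A1 + mat (of_nat (Suc N))) B1 B2 C1 C2 m1 m2 m3 =
        F14 (A1 + mat (of_nat N)) B1 B2 C1 C2 m1 m2 m3 + Tm (A1 + mat (of_nat (Suc N))) B1 B2 C1 C2 m1 m2 m3"
      using core[OF C1inv C2inv cp[of "Suc N", unfolded e] BC1 BC2 CC, of m1 m2 m3] unfolding e[symmetric] .
    then show ?case using Suc by (simp del: of_nat_Suc add: add.assoc)
  qed
  have P2: "F14 (A1 - mat (of_nat N)) B1 B2 C1 C2 m1 m2 m3 =
      F14 A1 B1 B2 C1 C2 m1 m2 m3 - (\<Sum>n1 \<in> {0..<N}. Tm (A1 - mat (of_nat n1)) B1 B2 C1 C2 m1 m2 m3)" for N m1 m2 m3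
  proof (induction N)
    case 0 then show ?case by simp
  next
    case (Suc N)
    have e: "A1 - mat (of_nat (Suc N)) + mat 1 = A1 - mat (of_nat N)"
      by (simp add: mat_add algebra_simps)
    have "F14 (A1 - mat (of_nat N)) B1 B2 C1 C2 m1 m2 m3 =
        F14 (A1 - mat (of_nat (Suc N))) B1 B2 C1 C2 m1 m2 m3 + Tm (A1 - mat (of_nat N)) B1 B2 C1 C2 m1 m2 m3"
      using core[OF C1inv C2inv cm[of N, folded e] BC1 BC2 CC, of m1 m2 m3] unfolding e .
    then show ?case using Suc by (simp add: algebra_simps)
  qed
  have iv: "{0..n-1} = {0..<n}" using n by auto
  show ?thesis
    unfolding expand_sum expand_sum_minus iv using P1 P2 by simp
qed

end
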